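(* Assume $\phi$ is convex and decreasing (i.e. $\phi(a)\ge\phi(b)$ whenever $a\le b$), and let $\mathbf{w}_{\mathrm{sup}}$ be a minimizer of $R_\phi$. Assume that for each $j=1,\dots,U$ the derivatives $\phi'(\mathbf{x}_{\mathrm{u},j}^\top\mathbf{w}_{\mathrm{sup}})$ and $\phi'(-\mathbf{x}_{\mathrm{u},j}^\top\mathbf{w}_{\mathrm{sup}})$ exist. Define $\mathbf{q}\in\mathbb{R}^U$ by $$q_j=\frac{\phi'(-\mathbf{x}_{\mathrm{u},j}^\top\mathbf{w}_{\mathrm{sup}})}{\phi'(\mathbf{x}_{\mathrm{u},j}^\top\mathbf{w}_{\mathrm{sup}})+\phi'(-\mathbf{x}_{\mathrm{u},j}^\top\mathbf{w}_{\mathrm{sup}})}$$ if the denominator is nonzero, and $q_j$ an arbitrary element of $[0,1]$ otherwise. Then $\mathbf{q}\in[0,1]^U$ and $\mathbf{w}_{\mathrm{sup}}$ is a minimizer of $R^{\mathrm{semi}}_\phi(\cdot,\mathbf{q})$. In particular $\mathbf{w}_{\mathrm{sup}}\in\mathcal{C}_\phi$.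
   Context: Fix integers $L,U,d\ge 1$. Let $\mathbf{X}\in\mathbb{R}^{L\times d}$ be a matrix whose rows $\mathbf{x}_1^\top,\dots,\mathbf{x}_L^\top$ are the labeled objects, with labels $\mathbf{y}\in\{-1,+1\}^L$. Let $\mathbf{X}_{\mathrm{u}}\in\mathbb{R}^{U\times d}$ be a matrix whose rows $\mathbf{x}_{\mathrm{u},1}^\top,\dots,\mathbf{x}_{\mathrm{u},U}^\top$ are the unlabeled objects. Let $\phi:\mathbb{R}\to\mathbb{R}$ be a loss function, $\Omega:\mathbb{R}^d\to\mathbb{R}$ a convex function and $\lambda\ge 0$. The supervised risk is $R_\phi(\mathbf{w})=\sum_{i=1}^L\phi(y_i\mathbf{x}_i^\top\mathbf{w})+\lambda\Omega(\mathbf{w})$. For responsibilities $\mathbf{q}\in[0,1]^U$ the semi-supervised risk is $R^{\mathrm{semi}}_\phi(\mathbf{w},\mathbf{q})=R_\phi(\mathbf{w})+\sum_{j=1}^U\big[q_j\phi(\mathbf{x}_{\mathrm{u},j}^\top\mathbf{w})+(1-q_j)\phi(-\mathbf{x}_{\mathrm{u},j}^\top\mathbf{w})\big]$. The constraint set is $\mathcal{C}_\phi=\{\mathbf{w}\in\mathbb{R}^d:\ \exists\,\mathbf{q}\in[0,1]^U \text{ such that } \mathbf{w} \text{ minimizes } R^{\mathrm{semi}}_\phi(\cdot,\mathbf{q})\}$. *)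

theory Defs
  imports "HOL-Analysis.Analysis"
begin

definition R_sup :: "(real \<Rightarrow> real) \<Rightarrow> (real^'d \<Rightarrow> real) \<Rightarrow> real \<Rightarrow> nat \<Rightarrow>
    (nat \<Rightarrow> real^'d) \<Rightarrow> (nat \<Rightarrow> real) \<Rightarrow> real^'d \<Rightarrow> real" where
  "R_sup \<phi> \<Omega> lam L X y w = (\<Sum>i<L. \<phi> (y i * (X i \<bullet> w))) + lam * \<Omega> w"

definition R_semi :: "(real \<Rightarrow> real) \<Rightarrow> (real^'d \<Rightarrow> real) \<Rightarrow> real \<Rightarrow> nat \<Rightarrow>
    (nat \<Rightarrow> real^'d) \<Rightarrow> (nat \<Rightarrow> real) \<Rightarrow> nat \<Rightarrow> (nat \<Rightarrow> real^'d) \<Rightarrow>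
    real^'d \<Rightarrow> (nat \<Rightarrow> real) \<Rightarrow> real" where
  "R_semi \<phi> \<Omega> lam L X y U Xu w q = R_sup \<phi> \<Omega> lam L X y w +
     (\<Sum>j<U. q j * \<phi> (Xu j \<bullet> w) + (1 - q j) * \<phi> (- (Xu j \<bullet> w)))"

definition is_minimizer :: "('a \<Rightarrow> real) \<Rightarrow> 'a \<Rightarrow> bool" where
  "is_minimizer f w \<longleftrightarrow> (\<forall>v. f w \<le> f v)"

definition C_phi :: "(real \<Rightarrow> real) \<Rightarrow> (real^'d \<Rightarrow> real) \<Rightarrow> real \<Rightarrow> nat \<Rightarrow>
    (nat \<Rightarrow> real^'d) \<Rightarrow> (nat \<Rightarrow> real) \<Rightarrow> nat \<Rightarrow> (nat \<Rightarrow> real^'d) \<Rightarrow> (real^'d) set" where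
  "C_phi \<phi> \<Omega> lam L X y U Xu = {w. \<exists>q. (\<forall>j<U. q j \<in> {0..1}) \<and>
      is_minimizer (\<lambda>v. R_semi \<phi> \<Omega> lam L X y U Xu v q) w}"

end

theory Submission
  imports Defs
begin

lemma tang:
  fixes \<phi> :: "real \<Rightarrow> real"
  assumes "convex_on UNIV \<phi>" "\<phi> differentiable (at c)"
  shows "\<phi> x - \<phi> c \<ge> deriv \<phi> c * (x - c)"
proof -
  have "(\<phi> has_field_derivative deriv \<phi> c) (at c within UNIV)"
    using assms(2) DERIV_deriv_iff_real_differentiable by auto
  then show ?thesis
    using convex_on_imp_above_tangent[OF assms(1)] by auto
qed

lemma derneg:
  fixes \<phi> :: "real \<Rightarrow> real"
  assumes "convex_on UNIV \<phi>" "\<phi> differentiable (at c)" "\<forall>a b. a \<le> b \<longrightarrow> \<phi> b \<le> \<phi> a"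
  shows "deriv \<phi> c \<le> 0"
proof -
  have "\<phi> (c+1) - \<phi> c \<ge> deriv \<phi> c * ((c+1) - c)" using tang[OF assms(1,2)] .
  moreover have "\<phi> (c+1) \<le> \<phi> c" using assms(3) by auto
  ultimately show ?thesis by simp
qed

lemma onedim:
  fixes \<phi> :: "real \<Rightarrow> real"
  assumes cv: "convex_on UNIV \<phi>" and dec: "\<forall>a b. a \<le> b \<longrightarrow> \<phi> b \<le> \<phi> a"
    and d1: "\<phi> differentiable (at t)" and d2: "\<phi> differentiable (at (-t))"
    and qd: "(let dp = deriv \<phi> t; dm = deriv \<phi> (- t) in
               (dp + dm \<noteq> 0 \<longrightarrow> q = dm / (dp + dm)) \<and>
               (dp + dm = 0 \<longrightarrow> q \<in> {0..1}))"
  shows "q \<in> {0..1} \<and> (\<forall>s. q * \<phi> t + (1 - q) * \<phi> (-t) \<le> q * \<phi> s + (1 - q) * \<phi> (-s))"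
proof -
  define dp where "dp = deriv \<phi> t"
  define dm where "dm = deriv \<phi> (-t)"
  have dpn: "dp \<le> 0" unfolding dp_def using derneg[OF cv d1 dec] .
  have dmn: "dm \<le> 0" unfolding dm_def using derneg[OF cv d2 dec] .
  have q01: "q \<in> {0..1}"
  proof (cases "dp + dm = 0")
    case True then show ?thesis using qd unfolding dp_def dm_def Let_def by auto
  next
    case False
    then have q: "q = dm / (dp + dm)" using qd unfolding dp_def dm_def Let_def by auto
    have neg: "dp + dm < 0" using False dpn dmn by linarith
    have "q \<ge> 0" unfolding q using neg dmn by (simp add: divide_nonpos_neg)
    moreover have "q \<le> 1" unfolding q using neg dpn by (simp add: divide_le_eq)
    ultimately show ?thesis by auto
  qed
  have key: "q * dp - (1 - q) * dm = 0"
  proof (cases "dp + dm = 0")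
    case True then have "dp = 0" "dm = 0" using dpn dmn by linarith+
    then show ?thesis by simp
  next
    case False
    then have q: "q = dm / (dp + dm)" using qd unfolding dp_def dm_def Let_def by auto
    show ?thesis unfolding q using False by (simp add: field_simps)
  qed
  have "\<forall>s. q * \<phi> t + (1 - q) * \<phi> (-t) \<le> q * \<phi> s + (1 - q) * \<phi> (-s)"
  proof
    fix s
    have a: "\<phi> s - \<phi> t \<ge> dp * (s - t)" unfolding dp_def using tang[OF cv d1] .
    have b: "\<phi> (-s) - \<phi> (-t) \<ge> dm * (-s - -t)" unfolding dm_def using tang[OF cv d2] .
    have q0: "q \<ge> 0" "1 - q \<ge> 0" using q01 by auto
    have "q * (\<phi> s - \<phi> t) + (1-q) * (\<phi> (-s) - \<phi> (-t)) \<ge> q * (dp * (s - t)) + (1-q) * (dm * (-s - -t))"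
      by (intro add_mono mult_left_mono a b q0)
    also have "q * (dp * (s - t)) + (1-q) * (dm * (-s - -t)) = (s - t) * (q * dp - (1 - q) * dm)"
      by (simp add: algebra_simps)
    also have "\<dots> = 0" using key by simp
    finally show "q * \<phi> t + (1 - q) * \<phi> (-t) \<le> q * \<phi> s + (1 - q) * \<phi> (-s)"
      by (simp add: algebra_simps)
  qed
  with q01 show ?thesis by blast
qed

theorem lemma2:
  fixes \<phi> :: "real \<Rightarrow> real" and \<Omega> :: "real^'d \<Rightarrow> real" and lam :: real
    and L U :: nat and X Xu :: "nat \<Rightarrow> real^'d" and y q :: "nat \<Rightarrow> real"
    and w_sup :: "real^'d"
  assumes "L \<ge> 1" and "U \<ge> 1"
    and "\<forall>i<L. y i \<in> {-1, 1}"
    and "convex_on UNIV \<Omega>" and "lam \<ge> 0"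
    and "convex_on UNIV \<phi>"
    and "\<forall>a b. a \<le> b \<longrightarrow> \<phi> b \<le> \<phi> a"
    and "is_minimizer (R_sup \<phi> \<Omega> lam L X y) w_sup"
    and "\<forall>j<U. \<phi> differentiable (at (Xu j \<bullet> w_sup)) \<and>
               \<phi> differentiable (at (- (Xu j \<bullet> w_sup)))"
    and "\<forall>j<U. (let dp = deriv \<phi> (Xu j \<bullet> w_sup); dm = deriv \<phi> (- (Xu j \<bullet> w_sup)) in
               (dp + dm \<noteq> 0 \<longrightarrow> q j = dm / (dp + dm)) \<and>
               (dp + dm = 0 \<longrightarrow> q j \<in> {0..1}))"
  shows "(\<forall>j<U. q j \<in> {0..1}) \<and>
         is_minimizer (\<lambda>w. R_semi \<phi> \<Omega> lam L X y U Xu w q) w_sup \<and>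
         w_sup \<in> C_phi \<phi> \<Omega> lam L X y U Xu"
proof -
  have J: "\<And>j. j < U \<Longrightarrow> q j \<in> {0..1} \<and> (\<forall>s. q j * \<phi> (Xu j \<bullet> w_sup) + (1 - q j) * \<phi> (- (Xu j \<bullet> w_sup))
      \<le> q j * \<phi> s + (1 - q j) * \<phi> (-s))"
    using onedim[OF assms(6) assms(7)] assms(9,10) by blast
  have M: "is_minimizer (\<lambda>w. R_semi \<phi> \<Omega> lam L X y U Xu w q) w_sup"
    unfolding is_minimizer_def R_semi_def
  proof
    fix v
    have "R_sup \<phi> \<Omega> lam L X y w_sup \<le> R_sup \<phi> \<Omega> lam L X y v"
      using assms(8) unfolding is_minimizer_def by blast
    moreover have "(\<Sum>j<U. q j * \<phi> (Xu j \<bullet> w_sup) + (1 - q j) * \<phi> (- (Xu j \<bullet> w_sup)))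
        \<le> (\<Sum>j<U. q j * \<phi> (Xu j \<bullet> v) + (1 - q j) * \<phi> (- (Xu j \<bullet> v)))"
      by (rule sum_mono) (use J in auto)
    ultimately show "R_sup \<phi> \<Omega> lam L X y w_sup + (\<Sum>j<U. q j * \<phi> (Xu j \<bullet> w_sup) + (1 - q j) * \<phi> (- (Xu j \<bullet> w_sup)))
        \<le> R_sup \<phi> \<Omega> lam L X y v + (\<Sum>j<U. q j * \<phi> (Xu j \<bullet> v) + (1 - q j) * \<phi> (- (Xu j \<bullet> v)))"
      by linarith
  qed
  have Q: "\<forall>j<U. q j \<in> {0..1}" using J by blast
  show ?thesis using M Q unfolding C_phi_def by blast
qed

end
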